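(* Let $\gamma\ge1$ and consider the SIEMS3 coefficients $(a_0,a_1,a_2)=(\gamma^2+\gamma-\tfrac16,\ \tfrac56-2\gamma^2,\ \gamma^2-\gamma+\tfrac13)$, $(b_0,\dots,b_3)=(\gamma^2,\ 2\gamma-2\gamma^2,\ \gamma^2-2\gamma+1,\ 0)$, $(c_0,c_1,c_2)=(\gamma^2+2\gamma,\ -2\gamma^2-2\gamma+1,\ \gamma^2)$. Then $$\sigma_{\mathrm{F}}=1,\quad\sigma_{\mathrm{E}}=\frac{3(4\gamma^2+4\gamma-1)}{12\gamma^2-2},\quad\lambda_{\mathrm{I}}=\frac{3(2\gamma-1)^2}{12\gamma^2-2},\quad\text{so that}\quad\mathfrak{I}_{\mathrm{IE}}=\frac{(2\gamma-1)^2}{4\gamma^2+4\gamma-1}.$$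
   Context: For coefficient vectors $(a_j)_{j=0}^{\mathrm{k}-1}$, $(b_j)_{j=0}^{\mathrm{k}}$, $(c_j)_{j=0}^{\mathrm{k}-1}$ define $a(\theta)=\sum_j a_je^{\imath j\theta}$, $b(\theta)=\sum_j b_je^{\imath j\theta}$, $c(\theta)=\sum_jc_je^{\imath j\theta}$ and $\sigma_{\mathrm{F}}=\max_{\theta\in[0,2\pi)}|1/a(\theta)|$, $\sigma_{\mathrm{E}}=\max_{\theta\in[0,2\pi)}|c(\theta)/a(\theta)|$, $\lambda_{\mathrm{I}}=\min_{\theta\in[0,2\pi)}\Re[b(\theta)/a(\theta)]$, $\mathfrak{I}_{\mathrm{IE}}=\lambda_{\mathrm{I}}/\sigma_{\mathrm{E}}$. Here $\mathrm{k}=3$. *)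

theory Defs
  imports "HOL-Analysis.Analysis"
begin

definition tpoly :: "real list \<Rightarrow> real \<Rightarrow> complex" where
  "tpoly cs \<theta> = (\<Sum>j<length cs. complex_of_real (cs ! j) * exp (\<i> * of_nat j * complex_of_real \<theta>))"

definition sigmaF :: "real list \<Rightarrow> real" where
  "sigmaF a = (SUP \<theta>\<in>{0..<2*pi}. cmod (1 / tpoly a \<theta>))"

definition sigmaE :: "real list \<Rightarrow> real list \<Rightarrow> real" where
  "sigmaE a c = (SUP \<theta>\<in>{0..<2*pi}. cmod (tpoly c \<theta> / tpoly a \<theta>))"

definition lambdaI :: "real list \<Rightarrow> real list \<Rightarrow> real" where
  "lambdaI a b = (INF \<theta>\<in>{0..<2*pi}. Re (tpoly b \<theta> / tpoly a \<theta>))"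

definition IIE :: "real list \<Rightarrow> real list \<Rightarrow> real list \<Rightarrow> real" where
  "IIE a b c = lambdaI a b / sigmaE a c"

end

theory Submission imports Defs begin
lemma tp3: "tpoly [p0,p1,p2] t = complex_of_real p0 + complex_of_real p1 * exp (\<i> * complex_of_real t) + complex_of_real p2 * exp (\<i> * 2 * complex_of_real t)"
  by (simp add: tpoly_def lessThan_Suc numeral_eq_Suc)
lemma tp4: "tpoly [p0,p1,p2,0] t = tpoly [p0,p1,p2] t"
  by (simp add: tpoly_def lessThan_Suc numeral_eq_Suc)
lemma tp_re: "Re (tpoly [p0,p1,p2] t) = p0 + p1*cos t + p2*(2*(cos t)^2 - 1)"
proof -
  have "exp (\<i> * complex_of_real t) = cis t" by (simp add: cis_conv_exp mult_ac)
  moreover have "exp (\<i> * 2 * complex_of_real t) = cis (2*t)" by (simp add: cis_conv_exp mult_ac)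
  ultimately show ?thesis by (simp add: tp3 cos_double_cos)
qed
lemma tp_im: "Im (tpoly [p0,p1,p2] t) = sin t * (p1 + 2*p2*cos t)"
proof -
  have "exp (\<i> * complex_of_real t) = cis t" by (simp add: cis_conv_exp mult_ac)
  moreover have "exp (\<i> * 2 * complex_of_real t) = cis (2*t)" by (simp add: cis_conv_exp mult_ac)
  moreover have "sin (t * 2) = 2 * sin t * cos t" using sin_double[of t] by (simp add: mult.commute)
  ultimately show ?thesis by (simp add: tp3 algebra_simps)
qed
lemma tp_n2: "(cmod (tpoly [p0,p1,p2] t))^2 = (p0 + p1*cos t + p2*(2*(cos t)^2 - 1))^2 + (1 - (cos t)^2) * (p1 + 2*p2*cos t)^2"
  unfolding cmod_power2 tp_re tp_im by (simp add: power_mult_distrib sin_squared_eq)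
lemma tp_reb: "Re (tpoly [q0,q1,q2] t / tpoly [p0,p1,p2] t) =
  ((q0 + q1*cos t + q2*(2*(cos t)^2 - 1)) * (p0 + p1*cos t + p2*(2*(cos t)^2 - 1))
   + (1 - (cos t)^2) * (q1 + 2*q2*cos t) * (p1 + 2*p2*cos t)) / (cmod (tpoly [p0,p1,p2] t))^2"
proof -
  have s: "sin t * (q1 + 2*q2*cos t) * (sin t * (p1 + 2*p2*cos t)) = (1 - (cos t)^2) * (q1 + 2*q2*cos t) * (p1 + 2*p2*cos t)"
  proof -
    have "sin t * (q1 + 2*q2*cos t) * (sin t * (p1 + 2*p2*cos t)) = (sin t)^2 * (q1 + 2*q2*cos t) * (p1 + 2*p2*cos t)"
      by (simp add: power2_eq_square algebra_simps)
    then show ?thesis by (simp add: sin_squared_eq)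
  qed
  show ?thesis unfolding Re_divide cmod_power2 tp_re tp_im s by simp
qed
lemma tp_pi: "tpoly [p0,p1,p2] pi = complex_of_real (p0 - p1 + p2)"
proof -
  have "exp (\<i> * 2 * complex_of_real pi) = 1"
    by (metis exp_two_pi_i mult.commute mult.left_commute)
  then show ?thesis by (simp add: tp3 mult.commute)
qed
lemma tp_0: "tpoly [p0,p1,p2] 0 = complex_of_real (p0 + p1 + p2)"
  by (simp add: tp3)
lemma pos_shift:
  fixes g :: real
  assumes "g \<ge> 1"
  shows "0 \<le> 4*g^2 - 4*g + 1/6"
    and "0 \<le> 8*g^4 - 8/3*g^2 - 5/18"
    and "0 \<le> 5/2 - 36*g + 60*g^2 + 144*g^3"
    and "0 \<le> 13/2 - 104*g + 440*g^2 - 432*g^3 - 648*g^4 + 1152*g^5"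
    and "0 \<le> -5/2 + 6*g"
    and "0 \<le> -31/6 + 34*g - 72*g^2 + 48*g^3"
proof -
  define t where "t = g - 1"
  have t: "0 \<le> t" "g = 1 + t" using assms by (auto simp: t_def)
  show "0 \<le> 4*g^2 - 4*g + 1/6"
  proof -
    have "4*g^2 - 4*g + 1/6 = 1/6 + 4*t + 4*t^2" unfolding t(2) by algebra
    then show ?thesis using t(1) by simp
  qed
  show "0 \<le> 8*g^4 - 8/3*g^2 - 5/18"
  proof -
    have "8*g^4 - 8/3*g^2 - 5/18 = 91/18 + 80/3*t + 136/3*t^2 + 32*t^3 + 8*t^4" unfolding t(2) by algebra
    then show ?thesis using t(1) by simp
  qed
  show "0 \<le> 5/2 - 36*g + 60*g^2 + 144*g^3"
  proof -
    have "5/2 - 36*g + 60*g^2 + 144*g^3 = 341/2 + 516*t + 492*t^2 + 144*t^3" unfolding t(2) by algebra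
    then show ?thesis using t(1) by simp
  qed
  show "0 \<le> 13/2 - 104*g + 440*g^2 - 432*g^3 - 648*g^4 + 1152*g^5"
  proof -
    have "13/2 - 104*g + 440*g^2 - 432*g^3 - 648*g^4 + 1152*g^5 = 829/2 + 2648*t + 6776*t^2 + 8496*t^3 + 5112*t^4 + 1152*t^5" unfolding t(2) by algebra
    then show ?thesis using t(1) by simp
  qed
  show "0 \<le> -5/2 + 6*g" using assms by simp
  show "0 \<le> -31/6 + 34*g - 72*g^2 + 48*g^3"
  proof -
    have "-31/6 + 34*g - 72*g^2 + 48*g^3 = 29/6 + 34*t + 72*t^2 + 48*t^3" unfolding t(2) by algebra
    then show ?thesis using t(1) by simp
  qed
qed

lemma conv_nonneg:
  fixes x p q :: real
  assumes "-1 \<le> x" "x \<le> 1" "0 \<le> p" "0 \<le> q"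
  shows "0 \<le> (1+x)/2*p + (1-x)/2*q"
  using assms by simp

lemma K1:
  fixes g x :: real
  assumes "g \<ge> 1" "-1 \<le> x" "x \<le> 1"
  shows "1 \<le> ((g^2+g-1/6) + (5/6-2*g^2)*x + (g^2-g+1/3)*(2*x^2-1))^2 + (1-x^2)*((5/6-2*g^2) + 2*(g^2-g+1/3)*x)^2"
proof -
  have e: "((g^2+g-1/6) + (5/6-2*g^2)*x + (g^2-g+1/3)*(2*x^2-1))^2 + (1-x^2)*((5/6-2*g^2) + 2*(g^2-g+1/3)*x)^2
    = 1 + (1-x)*((1+x)/2*(4*g^2 - 4*g + 1/6) + (1-x)/2*(8*g^4 - 8/3*g^2 - 5/18))" by (simp add: field_simps power2_eq_square power4_eq_xxxx)
  have "0 \<le> (1+x)/2*(4*g^2 - 4*g + 1/6) + (1-x)/2*(8*g^4 - 8/3*g^2 - 5/18)"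
    by (rule conv_nonneg[OF assms(2,3) pos_shift(1)[OF assms(1)] pos_shift(2)[OF assms(1)]])
  moreover have "0 \<le> 1 - x" using assms by simp
  ultimately show ?thesis unfolding e by simp
qed

lemma K2:
  fixes g x :: real
  assumes "g \<ge> 1" "-1 \<le> x" "x \<le> 1"
  shows "(12*g^2-2)^2 * (((g^2+2*g) + (-2*g^2-2*g+1)*x + g^2*(2*x^2-1))^2 + (1-x^2)*((-2*g^2-2*g+1) + 2*g^2*x)^2)
    \<le> (12*g^2+12*g-3)^2 * (((g^2+g-1/6) + (5/6-2*g^2)*x + (g^2-g+1/3)*(2*x^2-1))^2 + (1-x^2)*((5/6-2*g^2) + 2*(g^2-g+1/3)*x)^2)"
proof -
  have e: "(12*g^2+12*g-3)^2 * (((g^2+g-1/6) + (5/6-2*g^2)*x + (g^2-g+1/3)*(2*x^2-1))^2 + (1-x^2)*((5/6-2*g^2) + 2*(g^2-g+1/3)*x)^2)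
    - (12*g^2-2)^2 * (((g^2+2*g) + (-2*g^2-2*g+1)*x + g^2*(2*x^2-1))^2 + (1-x^2)*((-2*g^2-2*g+1) + 2*g^2*x)^2)
    = (1+x)*((1+x)/2*(5/2 - 36*g + 60*g^2 + 144*g^3) + (1-x)/2*(13/2 - 104*g + 440*g^2 - 432*g^3 - 648*g^4 + 1152*g^5))" by algebra
  have "0 \<le> (1+x)/2*(5/2 - 36*g + 60*g^2 + 144*g^3) + (1-x)/2*(13/2 - 104*g + 440*g^2 - 432*g^3 - 648*g^4 + 1152*g^5)"
    by (rule conv_nonneg[OF assms(2,3) pos_shift(3)[OF assms(1)] pos_shift(4)[OF assms(1)]])
  moreover have "0 \<le> 1 + x" using assms by simp
  ultimately show ?thesis using e by (smt (verit) mult_nonneg_nonneg)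
qed

lemma K3:
  fixes g x :: real
  assumes "g \<ge> 1" "-1 \<le> x" "x \<le> 1"
  shows "3*(2*g-1)^2 * (((g^2+g-1/6) + (5/6-2*g^2)*x + (g^2-g+1/3)*(2*x^2-1))^2 + (1-x^2)*((5/6-2*g^2) + 2*(g^2-g+1/3)*x)^2)
    \<le> (12*g^2-2) * ((g^2 + (2*g-2*g^2)*x + (g^2-2*g+1)*(2*x^2-1)) * ((g^2+g-1/6) + (5/6-2*g^2)*x + (g^2-g+1/3)*(2*x^2-1))
        + (1-x^2)*((2*g-2*g^2) + 2*(g^2-2*g+1)*x)*((5/6-2*g^2) + 2*(g^2-g+1/3)*x))"
proof -
  have e: "(12*g^2-2) * ((g^2 + (2*g-2*g^2)*x + (g^2-2*g+1)*(2*x^2-1)) * ((g^2+g-1/6) + (5/6-2*g^2)*x + (g^2-g+1/3)*(2*x^2-1))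
        + (1-x^2)*((2*g-2*g^2) + 2*(g^2-2*g+1)*x)*((5/6-2*g^2) + 2*(g^2-g+1/3)*x))
    - 3*(2*g-1)^2 * (((g^2+g-1/6) + (5/6-2*g^2)*x + (g^2-g+1/3)*(2*x^2-1))^2 + (1-x^2)*((5/6-2*g^2) + 2*(g^2-g+1/3)*x)^2)
    = (1+x)*((1+x)/2*(-5/2 + 6*g) + (1-x)/2*(-31/6 + 34*g - 72*g^2 + 48*g^3))" by algebra
  have "0 \<le> (1+x)/2*(-5/2 + 6*g) + (1-x)/2*(-31/6 + 34*g - 72*g^2 + 48*g^3)"
    by (rule conv_nonneg[OF assms(2,3) pos_shift(5)[OF assms(1)] pos_shift(6)[OF assms(1)]])
  moreover have "0 \<le> 1 + x" using assms by simp
  ultimately show ?thesis using e by (smt (verit) mult_nonneg_nonneg)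
qed

lemma frac_le_aux:
  fixes D P A N :: real
  assumes "0 < D" "0 < P" "A * P \<le> D * N"
  shows "A / D \<le> N / P"
  using assms by (simp add: field_simps)

lemma frac_cancel_aux:
  fixes D A B :: real
  assumes "D \<noteq> 0"
  shows "(3*A/D)/(3*B/D) = A/B"
  using assms by (simp add: field_simps)

theorem mainTheorem10:
  fixes \<gamma> :: real
  assumes "\<gamma> \<ge> 1"
  defines "a \<equiv> [\<gamma>^2 + \<gamma> - 1/6, 5/6 - 2*\<gamma>^2, \<gamma>^2 - \<gamma> + 1/3]"
      and "b \<equiv> [\<gamma>^2, 2*\<gamma> - 2*\<gamma>^2, \<gamma>^2 - 2*\<gamma> + 1, 0]"
      and "c \<equiv> [\<gamma>^2 + 2*\<gamma>, -2*\<gamma>^2 - 2*\<gamma> + 1, \<gamma>^2]"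
  shows "sigmaF a = 1
    \<and> sigmaE a c = 3 * (4*\<gamma>^2 + 4*\<gamma> - 1) / (12*\<gamma>^2 - 2)
    \<and> lambdaI a b = 3 * (2*\<gamma> - 1)^2 / (12*\<gamma>^2 - 2)
    \<and> IIE a b c = (2*\<gamma> - 1)^2 / (4*\<gamma>^2 + 4*\<gamma> - 1)"
proof -
  let ?g = \<gamma>
  have g1: "?g \<ge> 1" by fact
  have gg: "?g^2 \<ge> 1" using g1 by (simp add: one_le_power)
  have D: "12*?g^2 - 2 > 0" using gg by linarith
  have Sn: "12*?g^2 + 12*?g - 3 > 0" using gg g1 by linarith
  have na: "1 \<le> (cmod (tpoly a t))^2" and na1: "1 \<le> cmod (tpoly a t)" for t
  proof -
    have x: "-1 \<le> cos t" "cos t \<le> 1" by auto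
    show *: "1 \<le> (cmod (tpoly a t))^2"
      unfolding a_def tp_n2 using K1[OF g1 x] by (simp add: algebra_simps)
    show "1 \<le> cmod (tpoly a t)" using power2_le_imp_le[of 1 "cmod (tpoly a t)"] * by simp
  qed
  have F_bound: "cmod (1 / tpoly a t) \<le> 1" for t
    using na1[of t] by (simp add: norm_divide divide_le_eq)
  have a0: "tpoly a 0 = 1" unfolding a_def tp_0 by simp
  have sF: "sigmaF a = 1"
    unfolding sigmaF_def
  proof (rule cSup_eq_maximum)
    show "1 \<in> (\<lambda>\<theta>. cmod (1 / tpoly a \<theta>)) ` {0..<2 * pi}"
      using a0 by (intro image_eqI[of _ _ 0]) auto
  qed (use F_bound in auto)
  have apii: "tpoly a pi = complex_of_real (4*?g^2 - 2/3)" unfolding a_def tp_pi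
    by (simp add: algebra_simps)
  have cpii: "tpoly c pi = complex_of_real (4*?g^2 + 4*?g - 1)" unfolding c_def tp_pi
    by (simp add: algebra_simps)
  have bpii: "tpoly b pi = complex_of_real ((2*?g - 1)^2)" unfolding b_def tp4 tp_pi
    by (simp add: algebra_simps power2_eq_square)
  define S where "S = 3 * (4*?g^2 + 4*?g - 1) / (12*?g^2 - 2)"
  have S_eq: "S = (12*?g^2 + 12*?g - 3) / (12*?g^2 - 2)" unfolding S_def by (simp add: algebra_simps)
  have E_bound: "cmod (tpoly c t / tpoly a t) \<le> S" for t
  proof -
    have x: "-1 \<le> cos t" "cos t \<le> 1" by auto
    have k: "((12*?g^2-2) * cmod (tpoly c t))^2 \<le> ((12*?g^2+12*?g-3) * cmod (tpoly a t))^2"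
      unfolding power_mult_distrib using K2[OF g1 x]
      unfolding a_def c_def tp_n2 by (simp add: algebra_simps)
    have "(12*?g^2-2) * cmod (tpoly c t) \<le> (12*?g^2+12*?g-3) * cmod (tpoly a t)"
      using power2_le_imp_le[OF k] Sn by simp
    then show ?thesis using na1[of t] D Sn unfolding S_eq norm_divide
      by (simp add: divide_le_eq le_divide_eq mult.commute)
  qed
  have S_pi: "cmod (tpoly c pi / tpoly a pi) = S"
  proof -
    have p1: "4*?g^2 - 2/3 > 0" using D by simp
    have p2: "4*?g^2 + 4*?g - 1 > 0" using Sn by simp
    have "cmod (tpoly c pi / tpoly a pi) = (4*?g^2 + 4*?g - 1) / (4*?g^2 - 2/3)"
      unfolding apii cpii norm_divide norm_of_real using p1 p2 by simp
    also have "\<dots> = S" unfolding S_def using p1 by (simp add: field_simps)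
    finally show ?thesis .
  qed
  have sE: "sigmaE a c = S"
    unfolding sigmaE_def
  proof (rule cSup_eq_maximum)
    show "S \<in> (\<lambda>\<theta>. cmod (tpoly c \<theta> / tpoly a \<theta>)) ` {0..<2 * pi}"
      using S_pi by (intro image_eqI[of _ _ pi]) (auto simp: pi_gt_zero)
  qed (use E_bound in auto)
  define L where "L = 3 * (2*?g - 1)^2 / (12*?g^2 - 2)"
  have I_bound: "L \<le> Re (tpoly b t / tpoly a t)" for t
  proof -
    have x: "-1 \<le> cos t" "cos t \<le> 1" by auto
    have pos: "0 < (cmod (tpoly a t))^2" using na[of t] by linarith
    define P where "P = (cmod (tpoly a t))^2"
    define N where "N = ((?g^2 + (2*?g-2*?g^2)*cos t + (?g^2-2*?g+1)*(2*(cos t)^2-1)) * ((?g^2+?g-1/6) + (5/6-2*?g^2)*cos t + (?g^2-?g+1/3)*(2*(cos t)^2-1))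
        + (1-(cos t)^2)*((2*?g-2*?g^2) + 2*(?g^2-2*?g+1)*cos t)*((5/6-2*?g^2) + 2*(?g^2-?g+1/3)*cos t))"
    have r: "Re (tpoly b t / tpoly a t) = N / P"
      unfolding P_def N_def b_def a_def tp4 tp_reb by simp
    have p: "P = ((?g^2+?g-1/6) + (5/6-2*?g^2)*cos t + (?g^2-?g+1/3)*(2*(cos t)^2-1))^2 + (1-(cos t)^2)*((5/6-2*?g^2) + 2*(?g^2-?g+1/3)*cos t)^2"
      unfolding P_def a_def tp_n2 by simp
    have k: "3*(2*?g-1)^2 * P \<le> (12*?g^2-2) * N"
      unfolding p N_def by (rule K3[OF g1 x])
    show ?thesis unfolding r L_def using frac_le_aux[OF D pos[folded P_def] k] .
  qed
  have L_pi: "Re (tpoly b pi / tpoly a pi) = L"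
  proof -
    have p1: "4*?g^2 - 2/3 > 0" using D by simp
    have "Re (tpoly b pi / tpoly a pi) = (2*?g - 1)^2 / (4*?g^2 - 2/3)"
      unfolding apii bpii by (simp flip: of_real_divide)
    also have "\<dots> = L" unfolding L_def using p1 by (simp add: field_simps)
    finally show ?thesis .
  qed
  have lI: "lambdaI a b = L"
    unfolding lambdaI_def
  proof (rule cInf_eq_minimum)
    show "L \<in> (\<lambda>\<theta>. Re (tpoly b \<theta> / tpoly a \<theta>)) ` {0..<2 * pi}"
      using L_pi by (intro image_eqI[of _ _ pi]) (auto simp: pi_gt_zero)
  qed (use I_bound in auto)
  have II: "IIE a b c = (2*?g - 1)^2 / (4*?g^2 + 4*?g - 1)"
  proof -
    have p2: "4*?g^2 + 4*?g - 1 > 0" using Sn by simp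
    show ?thesis unfolding IIE_def lI sE L_def S_def using D by (rule frac_cancel_aux[OF less_imp_neq[symmetric]])
  qed
  show ?thesis using sF sE lI II unfolding S_def L_def by blast
qed

end
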